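(* Let $B$ be a minimum-weight basis of the weighted uncertainty matroid $\mathcal{M}=(E,\mathcal{I},A,w)$. A set $Q\subseteq E$ is a certificate that verifies $B$ if and only if for every $f\in E\setminus B$ and every $e\in C_f\setminus\{f\}$, where $C_f$ is the fundamental circuit of $f$ with respect to $B$, we have $U_e(Q)\le L_f(Q)$.
   Context: A weighted uncertainty matroid $\mathcal{M}=(E,\mathcal{I},A,w)$ consists of a matroid $M=(E,\mathcal{I})$ on a finite set $E$, for each $e\in E$ a non-empty finite union $A_e$ of bounded real intervals (each open or closed), and a weight $w_e\in A_e$. Let $L_e=\inf A_e$, $U_e=\sup A_e$. A minimum-weight basis is a basis of $M$ minimizing the sum of weights $w$. A weight assignment is $w^*:E\to\mathbb{R}$ with $w^*_e\in A_e$, consistent with $Q$ if $w^*_e=w_e$ for $e\in Q$. $Q$ verifies $B$ (is a certificate for $B$) if for every weight assignment consistent with $Q$, $B$ is a minimum-weight basis with respect to it. For $Q\subseteq E$: $L_e(Q)=w_e$ if $e\in Q$, else $L_e$; $U_e(Q)=w_e$ if $e\in Q$, else $U_e$. For a basis $B$ and $f\notin B$, the fundamental circuit $C_f$ is the unique circuit contained in $B\cup\{f\}$. *)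

theory Defs
  imports Main "HOL-Library.Extended_Real" Complex_Main
begin

definition matroid :: "'a set \<Rightarrow> ('a set \<Rightarrow> bool) \<Rightarrow> bool" where
  "matroid E indep \<longleftrightarrow>
     finite E \<and>
     (\<forall>I. indep I \<longrightarrow> I \<subseteq> E) \<and>
     indep {} \<and>
     (\<forall>I J. indep J \<and> I \<subseteq> J \<longrightarrow> indep I) \<and>
     (\<forall>I J. indep I \<and> indep J \<and> card I < card J \<longrightarrow> (\<exists>x\<in>J - I. indep (insert x I)))"

definition basis :: "'a set \<Rightarrow> ('a set \<Rightarrow> bool) \<Rightarrow> 'a set \<Rightarrow> bool" where
  "basis E indep B \<longleftrightarrow> indep B \<and> (\<forall>x\<in>E - B. \<not> indep (insert x B))"

definition circuit :: "'a set \<Rightarrow> ('a set \<Rightarrow> bool) \<Rightarrow> 'a set \<Rightarrow> bool" where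
  "circuit E indep C \<longleftrightarrow> C \<subseteq> E \<and> \<not> indep C \<and> (\<forall>D. D \<subset> C \<longrightarrow> indep D)"

definition fund_circuit :: "'a set \<Rightarrow> ('a set \<Rightarrow> bool) \<Rightarrow> 'a set \<Rightarrow> 'a \<Rightarrow> 'a set" where
  "fund_circuit E indep B f = (THE C. circuit E indep C \<and> C \<subseteq> insert f B)"

definition bounded_interval :: "real set \<Rightarrow> bool" where
  "bounded_interval I \<longleftrightarrow> (\<exists>a b. a \<le> b \<and> (I = {a..b} \<or> I = {a<..<b}))"

definition uncertainty_set :: "real set \<Rightarrow> bool" where
  "uncertainty_set S \<longleftrightarrow> S \<noteq> {} \<and>
     (\<exists>\<I>. finite \<I> \<and> (\<forall>I\<in>\<I>. bounded_interval I) \<and> S = \<Union>\<I>)"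

definition weighted_uncertainty_matroid ::
  "'a set \<Rightarrow> ('a set \<Rightarrow> bool) \<Rightarrow> ('a \<Rightarrow> real set) \<Rightarrow> ('a \<Rightarrow> real) \<Rightarrow> bool" where
  "weighted_uncertainty_matroid E indep A w \<longleftrightarrow>
     matroid E indep \<and> (\<forall>e\<in>E. uncertainty_set (A e) \<and> w e \<in> A e)"

definition L :: "('a \<Rightarrow> real set) \<Rightarrow> 'a \<Rightarrow> real" where
  "L A e = Inf (A e)"

definition U :: "('a \<Rightarrow> real set) \<Rightarrow> 'a \<Rightarrow> real" where
  "U A e = Sup (A e)"

definition LQ :: "('a \<Rightarrow> real set) \<Rightarrow> ('a \<Rightarrow> real) \<Rightarrow> 'a set \<Rightarrow> 'a \<Rightarrow> real" where
  "LQ A w Q e = (if e \<in> Q then w e else L A e)"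

definition UQ :: "('a \<Rightarrow> real set) \<Rightarrow> ('a \<Rightarrow> real) \<Rightarrow> 'a set \<Rightarrow> 'a \<Rightarrow> real" where
  "UQ A w Q e = (if e \<in> Q then w e else U A e)"

definition min_weight_basis :: "'a set \<Rightarrow> ('a set \<Rightarrow> bool) \<Rightarrow> ('a \<Rightarrow> real) \<Rightarrow> 'a set \<Rightarrow> bool" where
  "min_weight_basis E indep c B \<longleftrightarrow> basis E indep B \<and>
     (\<forall>B'. basis E indep B' \<longrightarrow> sum c B \<le> sum c B')"

definition consistent_assignment ::
  "'a set \<Rightarrow> ('a \<Rightarrow> real set) \<Rightarrow> ('a \<Rightarrow> real) \<Rightarrow> 'a set \<Rightarrow> ('a \<Rightarrow> real) \<Rightarrow> bool" where
  "consistent_assignment E A w Q w' \<longleftrightarrow> (\<forall>e\<in>E. w' e \<in> A e) \<and> (\<forall>e\<in>Q. w' e = w e)"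

definition verifies ::
  "'a set \<Rightarrow> ('a set \<Rightarrow> bool) \<Rightarrow> ('a \<Rightarrow> real set) \<Rightarrow> ('a \<Rightarrow> real) \<Rightarrow> 'a set \<Rightarrow> 'a set \<Rightarrow> bool" where
  "verifies E indep A w Q B \<longleftrightarrow>
     (\<forall>w'. consistent_assignment E A w Q w' \<longrightarrow> min_weight_basis E indep w' B)"

end

theory Submission
  imports Defs
begin

lemma m_finite: "matroid E indep \<Longrightarrow> finite E"
  by (simp add: matroid_def)
lemma m_sub: "matroid E indep \<Longrightarrow> indep I \<Longrightarrow> I \<subseteq> E"
  by (simp add: matroid_def)
lemma m_fin: "matroid E indep \<Longrightarrow> indep I \<Longrightarrow> finite I"
  using m_finite m_sub finite_subset by metis
lemma m_mono: "matroid E indep \<Longrightarrow> indep J \<Longrightarrow> I \<subseteq> J \<Longrightarrow> indep I"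
  unfolding matroid_def by blast
lemma m_aug: "matroid E indep \<Longrightarrow> indep I \<Longrightarrow> indep J \<Longrightarrow> card I < card J
   \<Longrightarrow> \<exists>x\<in>J-I. indep (insert x I)"
  unfolding matroid_def by blast

lemma basis_card_ge:
  assumes m: "matroid E indep" and b: "basis E indep B" and i: "indep I"
  shows "card I \<le> card B"
proof (rule ccontr)
  assume "\<not> card I \<le> card B"
  hence "card B < card I" by simp
  moreover have "indep B" using b by (simp add: basis_def)
  ultimately obtain x where x: "x \<in> I - B" "indep (insert x B)" using m_aug[OF m _ i] by blast
  have "x \<in> E" using x m_sub[OF m i] by blast
  thus False using b x by (auto simp: basis_def)
qed

lemma indep_card_basis:
  assumes m: "matroid E indep" and b: "basis E indep B" and i: "indep I" and c: "card I = card B"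
  shows "basis E indep I"
  unfolding basis_def
proof (intro conjI ballI i notI)
  fix x assume x: "x \<in> E - I" and ii: "indep (insert x I)"
  have "card (insert x I) = card I + 1" using x m_fin[OF m i] by simp
  thus False using basis_card_ge[OF m b ii] c by simp
qed

lemma max_ext:
  assumes m: "matroid E indep" and k: "indep K" "K \<subseteq> X" and X: "finite X"
  shows "\<exists>M. indep M \<and> K \<subseteq> M \<and> M \<subseteq> X \<and> (\<forall>y\<in>X-M. \<not> indep (insert y M))"
proof -
  let ?P = "\<lambda>M. indep M \<and> K \<subseteq> M \<and> M \<subseteq> X"
  have "\<forall>y. ?P y \<longrightarrow> card y < card X + 1"
    using X by (auto dest: card_mono)
  then obtain M where M: "?P M" "\<forall>y. ?P y \<longrightarrow> card y \<le> card M"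
    using ex_has_greatest_nat[of ?P K card "card X + 1"] k by blast
  show ?thesis
  proof (intro exI conjI ballI notI)
    fix y assume y: "y \<in> X - M" and ii: "indep (insert y M)"
    have "?P (insert y M)" using M y ii by auto
    hence "card (insert y M) \<le> card M" using M by blast
    moreover have "finite M" using M X finite_subset by blast
    ultimately show False using y by simp
  qed (use M in auto)
qed

lemma circ_exchange:
  assumes m: "matroid E indep" and b: "basis E indep B" and f: "f \<in> E - B"
    and C: "circuit E indep C" "C \<subseteq> insert f B" and e: "e \<in> C" "e \<noteq> f"
  shows "indep (insert f (B - {e}))"
proof -
  let ?X = "insert f (B - {e})"
  have iB: "indep B" using b by (simp add: basis_def)
  have fB: "finite B" using m_fin[OF m iB] .
  have eB: "e \<in> B" using C e by blast
  have iK: "indep (C - {e})" using C e unfolding circuit_def by blast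
  have KX: "C - {e} \<subseteq> ?X" using C by blast
  obtain M where M: "indep M" "C - {e} \<subseteq> M" "M \<subseteq> ?X" "\<forall>y\<in>?X-M. \<not> indep (insert y M)"
    using max_ext[OF m iK KX] fB by auto
  show ?thesis
  proof (cases "M = ?X")
    case True thus ?thesis using M by simp
  next
    case False
    have cX: "card ?X = card B" using fB f eB
      by (simp add: card_Diff_singleton) (metis One_nat_def Suc_pred card_gt_0_iff empty_iff)
    have "card M < card ?X" using False M(3) fB by (meson finite.insertI finite_Diff psubsetI psubset_card_mono)
    then obtain x where x: "x \<in> B - M" "indep (insert x M)" using m_aug[OF m M(1) iB] cX by auto
    show ?thesis
    proof (cases "x = e")
      case True
      have "C \<subseteq> insert x M" using M(2) True by blast
      hence "indep C" using m_mono[OF m x(2)] by blast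
      thus ?thesis using C unfolding circuit_def by blast
    next
      case False
      hence "x \<in> ?X - M" using x by blast
      thus ?thesis using M(4) x by blast
    qed
  qed
qed

lemma circuit_unique:
  assumes m: "matroid E indep" and b: "basis E indep B" and f: "f \<in> E - B"
    and C1: "circuit E indep C1" "C1 \<subseteq> insert f B"
    and C2: "circuit E indep C2" "C2 \<subseteq> insert f B"
  shows "C1 = C2"
proof (rule ccontr)
  assume ne: "C1 \<noteq> C2"
  have iB: "indep B" using b by (simp add: basis_def)
  have "\<not> C2 \<subseteq> C1"
  proof
    assume "C2 \<subseteq> C1"
    hence "C2 \<subset> C1" using ne by blast
    thus False using C1 C2 unfolding circuit_def by blast
  qed
  then obtain e where e: "e \<in> C2" "e \<notin> C1" by blast
  have "f \<in> C1"
  proof (rule ccontr)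
    assume "f \<notin> C1"
    hence "C1 \<subseteq> B" using C1 by blast
    hence "indep C1" using m_mono[OF m iB] by blast
    thus False using C1 unfolding circuit_def by blast
  qed
  hence "e \<noteq> f" using e by blast
  hence "indep (insert f (B - {e}))" using circ_exchange[OF m b f C2 e(1)] by blast
  moreover have "C1 \<subseteq> insert f (B - {e})" using C1 e by blast
  ultimately have "indep C1" using m_mono[OF m] by blast
  thus False using C1 unfolding circuit_def by blast
qed

lemma circuit_exists:
  assumes m: "matroid E indep" and b: "basis E indep B" and f: "f \<in> E - B"
  shows "\<exists>C. circuit E indep C \<and> C \<subseteq> insert f B"
proof -
  have iB: "indep B" using b by (simp add: basis_def)
  let ?P = "\<lambda>C. C \<subseteq> insert f B \<and> \<not> indep C"
  have "?P (insert f B)" using b f by (simp add: basis_def)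
  then obtain C where C: "?P C" "\<forall>y. ?P y \<longrightarrow> card C \<le> card y"
    using ex_has_least_nat[of ?P "insert f B" card] by metis
  have fin: "finite (insert f B)" using m_fin[OF m iB] by simp
  have "circuit E indep C" unfolding circuit_def
  proof (intro conjI allI impI)
    have "insert f B \<subseteq> E" using m_sub[OF m iB] f by blast
    thus "C \<subseteq> E" using C(1) by (meson subset_trans)
    show "\<not> indep C" using C by blast
    fix D assume D: "D \<subset> C"
    show "indep D"
    proof (rule ccontr)
      assume "\<not> indep D"
      moreover have "D \<subseteq> insert f B" using C(1) D by blast
      ultimately have "card C \<le> card D" using C(2) by blast
      moreover have "card D < card C" using D C fin by (meson finite_subset psubset_card_mono)
      ultimately show False by simp
    qed
  qed
  thus ?thesis using C by blast
qed

lemma fc: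
  assumes m: "matroid E indep" and b: "basis E indep B" and f: "f \<in> E - B"
  shows "circuit E indep (fund_circuit E indep B f) \<and> fund_circuit E indep B f \<subseteq> insert f B"
proof -
  obtain C where C: "circuit E indep C" "C \<subseteq> insert f B" using circuit_exists[OF m b f] by blast
  show ?thesis unfolding fund_circuit_def
    by (rule theI[of _ C]) (use C circuit_unique[OF m b f] in blast)+
qed

lemma fc_exchange:
  assumes m: "matroid E indep" and b: "basis E indep B" and f: "f \<in> E - B"
    and e: "e \<in> fund_circuit E indep B f - {f}"
  shows "basis E indep (insert f (B - {e}))"
proof -
  have C: "circuit E indep (fund_circuit E indep B f)" "fund_circuit E indep B f \<subseteq> insert f B"
    using fc[OF m b f] by auto
  have i: "indep (insert f (B - {e}))" using circ_exchange[OF m b f C] e by blast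
  have iB: "indep B" using b by (simp add: basis_def)
  have fB: "finite B" using m_fin[OF m iB] .
  have eB: "e \<in> B" using C e by blast
  have cX: "card (insert f (B - {e})) = card B" using fB f eB
    by (simp add: card_Diff_singleton) (metis One_nat_def Suc_pred card_gt_0_iff empty_iff)
  show ?thesis using indep_card_basis[OF m b i cX] .
qed

lemma exists_exchange:
  assumes m: "matroid E indep" and b: "basis E indep B" and b': "basis E indep B'"
    and f: "f \<in> B' - B"
  shows "\<exists>e\<in>fund_circuit E indep B f - {f}. e \<notin> B' \<and> basis E indep (insert e (B' - {f}))"
proof (rule ccontr)
  assume H: "\<not> ?thesis"
  let ?C = "fund_circuit E indep B f"
  have iB': "indep B'" using b' by (simp add: basis_def)
  have fB': "finite B'" using m_fin[OF m iB'] .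
  have fE: "f \<in> E - B" using f m_sub[OF m iB'] by blast
  have C: "circuit E indep ?C" "?C \<subseteq> insert f B" using fc[OF m b fE] by auto
  have iB: "indep B" using b by (simp add: basis_def)
  have cb: "card B' = card B" using basis_card_ge[OF m b iB'] basis_card_ge[OF m b' iB]
    by linarith
  have H2: "\<forall>e\<in>?C - {f}. e \<notin> B' \<longrightarrow> \<not> indep (insert e (B' - {f}))"
  proof (intro ballI impI notI)
    fix e assume e: "e \<in> ?C - {f}" "e \<notin> B'" and ii: "indep (insert e (B' - {f}))"
    have c1: "card (insert e (B' - {f})) = Suc (card (B' - {f}))" using e fB' by simp
    have c2: "Suc (card (B' - {f})) = card B'" using f fB'
      by (metis DiffD1 card_Suc_Diff1)
    have "basis E indep (insert e (B' - {f}))" using indep_card_basis[OF m b ii] cb c1 c2 by simp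
    hence "\<exists>e\<in>?C - {f}. e \<notin> B' \<and> basis E indep (insert e (B' - {f}))" using e by blast
    thus False using H by simp
  qed
  let ?X = "(B' - {f}) \<union> (?C - {f})"
  have fC: "f \<in> ?C"
  proof (rule ccontr)
    assume "f \<notin> ?C"
    hence "?C \<subseteq> B" using C(2) by blast
    hence "indep ?C" using m_mono[OF m iB] by blast
    thus False using C(1) unfolding circuit_def by blast
  qed
  have "?C - {f} \<subset> ?C" using fC by blast
  hence iK: "indep (?C - {f})" using C(1) unfolding circuit_def by blast
  have finC: "finite ?C" using C(1) m_finite[OF m] unfolding circuit_def by (meson finite_subset)
  have finX: "finite ?X" using fB' finC by simp
  have KX: "?C - {f} \<subseteq> ?X" by (rule Un_upper2)
  obtain M where M: "indep M" "?C - {f} \<subseteq> M" "M \<subseteq> ?X" "\<forall>y\<in>?X-M. \<not> indep (insert y M)"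
    using max_ext[OF m iK KX finX] by blast
  have iB'f: "indep (B' - {f})" using m_mono[OF m iB' Diff_subset] .
  have cM: "card M \<le> card (B' - {f})"
  proof (rule ccontr)
    assume "\<not> ?thesis"
    then obtain y where y: "y \<in> M - (B' - {f})" "indep (insert y (B' - {f}))"
      using m_aug[OF m iB'f M(1)] by auto
    have "y \<in> ?X" using y M(3) by blast
    hence "y \<in> ?C - {f}" "y \<notin> B'" using y by blast+
    thus False using H2 y(2) by blast
  qed
  have "card (B' - {f}) < card B'" using f fB' by (meson DiffD1 card_Diff1_less)
  then obtain x where x: "x \<in> B' - M" "indep (insert x M)" using m_aug[OF m M(1) iB'] cM by auto
  show False
  proof (cases "x = f")
    case True
    have "?C \<subseteq> insert x M" using M(2) True by blast
    hence "indep ?C" using m_mono[OF m x(2)] by blast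
    thus False using C unfolding circuit_def by blast
  next
    case False
    hence "x \<in> ?X - M" using x by blast
    thus False using M(4) x by blast
  qed
qed

lemma cycle_opt:
  assumes m: "matroid E indep" and b: "basis E indep B"
    and cond: "\<forall>f\<in>E - B. \<forall>e\<in>fund_circuit E indep B f - {f}. c e \<le> c f"
  shows "basis E indep B' \<Longrightarrow> sum (c::'a \<Rightarrow> real) B \<le> sum c B'"
proof (induction "card (B' - B)" arbitrary: B' rule: less_induct)
  case less
  have iB: "indep B" using b by (simp add: basis_def)
  have fB: "finite B" using m_fin[OF m iB] .
  have iB': "indep B'" using less.prems by (simp add: basis_def)
  have fB': "finite B'" using m_fin[OF m iB'] .
  have cb: "card B' = card B" using basis_card_ge[OF m b iB'] basis_card_ge[OF m less.prems] b
    by (simp add: basis_def le_antisym)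
  show ?case
  proof (cases "B' - B = {}")
    case True
    hence "B' \<subseteq> B" by blast
    hence "B' = B" using cb fB by (simp add: card_subset_eq)
    thus ?thesis by simp
  next
    case False
    then obtain f where f: "f \<in> B' - B" by blast
    obtain e where e: "e \<in> fund_circuit E indep B f - {f}" "e \<notin> B'"
      "basis E indep (insert e (B' - {f}))" using exists_exchange[OF m b less.prems f] by blast
    have fE: "f \<in> E - B" using f m_sub[OF m iB'] by blast
    have C: "fund_circuit E indep B f \<subseteq> insert f B" using fc[OF m b fE] by auto
    have eB: "e \<in> B" using C e by blast
    have "insert e (B' - {f}) - B = (B' - B) - {f}" using eB by blast
    moreover have "card ((B' - B) - {f}) < card (B' - B)" using f fB'
      by (meson card_Diff1_less finite_Diff)
    ultimately have "card (insert e (B' - {f}) - B) < card (B' - B)" by simp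
    hence "sum c B \<le> sum c (insert e (B' - {f}))" using less.hyps e(3) by blast
    also have "\<dots> = c e + sum c B' - c f" using e(2) f fB'
      by (simp add: sum_diff1)
    also have "\<dots> \<le> sum c B'" using cond fE e(1) by fastforce
    finally show ?thesis .
  qed
qed

lemma unc_bdd:
  assumes "uncertainty_set S"
  shows "bdd_above S \<and> bdd_below S"
proof -
  obtain \<I> where I: "finite \<I>" "\<forall>I\<in>\<I>. bounded_interval I" "S = \<Union>\<I>"
    using assms unfolding uncertainty_set_def by blast
  have "\<forall>I\<in>\<I>. bdd_above I \<and> bdd_below I"
  proof
    fix I assume "I \<in> \<I>"
    then obtain a b where "I = {a..b} \<or> I = {a<..<b}" using I unfolding bounded_interval_def by blast
    thus "bdd_above I \<and> bdd_below I" by auto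
  qed
  thus ?thesis using I bdd_above_UN[of \<I> "\<lambda>I. I"] bdd_below_UN[of \<I> "\<lambda>I. I"] by simp
qed

lemma sup_le_inf:
  fixes S T :: "real set"
  assumes "S \<noteq> {}" "T \<noteq> {}" "\<forall>a\<in>S. \<forall>b\<in>T. a \<le> b"
  shows "Sup S \<le> Inf T"
  using assms by (meson cInf_greatest cSup_least)

lemma SA_props:
  fixes Q :: "'a set"
  assumes "uncertainty_set (A e)" "w e \<in> A e"
  defines "S \<equiv> (if e \<in> Q then {w e} else A e)"
  shows "S \<noteq> {}" "bdd_above S" "bdd_below S" "S \<subseteq> A e"
    "UQ A w Q e = Sup S" "LQ A w Q e = Inf S"
  using assms unc_bdd[OF assms(1)]
  by (auto simp: UQ_def LQ_def U_def L_def)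

theorem corollary9:
  fixes E :: "'a set" and indep :: "'a set \<Rightarrow> bool"
    and A :: "'a \<Rightarrow> real set" and w :: "'a \<Rightarrow> real"
    and B Q :: "'a set"
  assumes "weighted_uncertainty_matroid E indep A w"
    and "min_weight_basis E indep w B"
    and "Q \<subseteq> E"
  shows "verifies E indep A w Q B \<longleftrightarrow>
    (\<forall>f\<in>E - B. \<forall>e\<in>fund_circuit E indep B f - {f}. UQ A w Q e \<le> LQ A w Q f)"
proof -
  have m: "matroid E indep" and Aok: "\<forall>e\<in>E. uncertainty_set (A e) \<and> w e \<in> A e"
    using assms(1) unfolding weighted_uncertainty_matroid_def by auto
  have b: "basis E indep B" using assms(2) unfolding min_weight_basis_def by auto
  have iB: "indep B" using b by (simp add: basis_def)
  have fB: "finite B" using m_fin[OF m iB] .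
  define SA where "SA = (\<lambda>e. if e \<in> Q then {w e} else A e)"
  have SA: "SA e \<noteq> {}" "bdd_above (SA e)" "bdd_below (SA e)" "SA e \<subseteq> A e"
    "UQ A w Q e = Sup (SA e)" "LQ A w Q e = Inf (SA e)" if "e \<in> E" for e
    using SA_props[of A e w Q] Aok that unfolding SA_def by auto
  show ?thesis
  proof
    assume ver: "verifies E indep A w Q B"
    show "\<forall>f\<in>E - B. \<forall>e\<in>fund_circuit E indep B f - {f}. UQ A w Q e \<le> LQ A w Q f"
    proof (intro ballI)
      fix f e assume f: "f \<in> E - B" and e: "e \<in> fund_circuit E indep B f - {f}"
      have C: "circuit E indep (fund_circuit E indep B f)" "fund_circuit E indep B f \<subseteq> insert f B"
        using fc[OF m b f] by auto
      have eE: "e \<in> E" using C(1) e unfolding circuit_def by blast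
      have eB: "e \<in> B" using C(2) e by blast
      have fE: "f \<in> E" using f by blast
      have b2: "basis E indep (insert f (B - {e}))" using fc_exchange[OF m b f e] .
      have "Sup (SA e) \<le> Inf (SA f)"
      proof (rule sup_le_inf[OF SA(1)[OF eE] SA(1)[OF fE]], intro ballI)
        fix a c assume a: "a \<in> SA e" and c: "c \<in> SA f"
        define w' where "w' = (\<lambda>x. if x = e then a else if x = f then c else w x)"
        have ef: "e \<noteq> f" using e by blast
        have "consistent_assignment E A w Q w'"
          unfolding consistent_assignment_def
        proof (intro conjI ballI)
          fix x assume "x \<in> E"
          thus "w' x \<in> A x" using a c SA(4)[OF eE] SA(4)[OF fE] Aok unfolding w'_def by auto
        next
          fix x assume "x \<in> Q"
          thus "w' x = w x" using a c ef unfolding w'_def SA_def by auto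
        qed
        hence "min_weight_basis E indep w' B" using ver unfolding verifies_def by blast
        hence "sum w' B \<le> sum w' (insert f (B - {e}))" using b2 unfolding min_weight_basis_def by blast
        also have "\<dots> = w' f + (sum w' B - w' e)" using fB f eB by (simp add: sum_diff1)
        finally have "w' e \<le> w' f" by simp
        thus "a \<le> c" using ef unfolding w'_def by simp
      qed
      thus "UQ A w Q e \<le> LQ A w Q f" using SA(5)[OF eE] SA(6)[OF fE] by simp
    qed
  next
    assume cond: "\<forall>f\<in>E - B. \<forall>e\<in>fund_circuit E indep B f - {f}. UQ A w Q e \<le> LQ A w Q f"
    show "verifies E indep A w Q B"
      unfolding verifies_def
    proof (intro allI impI)
      fix w' assume cw: "consistent_assignment E A w Q w'"
      have inS: "w' x \<in> SA x" if "x \<in> E" for x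
        using cw that unfolding consistent_assignment_def SA_def by auto
      have cond': "\<forall>f\<in>E - B. \<forall>e\<in>fund_circuit E indep B f - {f}. w' e \<le> w' f"
      proof (intro ballI)
        fix f e assume f: "f \<in> E - B" and e: "e \<in> fund_circuit E indep B f - {f}"
        have C: "circuit E indep (fund_circuit E indep B f)"
          using fc[OF m b f] by auto
        have eE: "e \<in> E" using C e unfolding circuit_def by blast
        have fE: "f \<in> E" using f by blast
        have "w' e \<le> Sup (SA e)" using cSup_upper[OF inS[OF eE] SA(2)[OF eE]] .
        also have "\<dots> \<le> Inf (SA f)" using cond f e SA(5)[OF eE] SA(6)[OF fE] by metis
        also have "\<dots> \<le> w' f" using cInf_lower[OF inS[OF fE] SA(3)[OF fE]] .
        finally show "w' e \<le> w' f" .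
      qed
      show "min_weight_basis E indep w' B"
        unfolding min_weight_basis_def using b cycle_opt[OF m b cond'] by blast
    qed
  qed
qed

end
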